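(* Let $f:\mathbb{R}^n\to\mathbb{R}$ be a polynomial of degree at most $4$, let $\mu_f$ be its Steklov function, and let $C:=\sum_{i=1}^n \nabla^2 f_{ii}$ (a constant symmetric $n\times n$ matrix, $f_{ii}=\partial^2 f/\partial x_i^2$). Assume $C$ is positive semidefinite and $C\neq 0$. Let $\lambda_1(C)\ge\cdots\ge\lambda_n(C)$ be its eigenvalues, with an orthonormal basis of eigenvectors $v_1,\ldots,v_n$ ($Cv_i=\lambda_i(C)v_i$), and let $r:=\dim N(C)^\perp$. Fix $L>0$, and for $t_0>0$ let $T:=B[0,L]\times(t_0,+\infty)$, where $B[0,L]=\{x\in\mathbb{R}^n:\|x\|\le L\}$. (a) Assume $\lambda_n(C)=0$ (so $r<n$ and $N(C)=\mathrm{span}[v_{r+1},\ldots,v_n]$). Define $\varphi_{\mathcal N}:S_{n-r}\times\mathbb{R}^n\to\mathbb{R}$, with $\alpha=(\alpha_{r+1},\ldots,\alpha_n)$, by \[ \varphi_{\mathcal N}(\alpha,x)=\sum_{i,j=r+1}^n \alpha_i\alpha_j\, v_i^T\nabla^2 f(x)\, v_j . \] Consider the statements: (i) $\varphi_{\mathcal N}(\alpha,x)>0$ for every $(\alpha,x)\in S_{n-r}\times B[0,L]$; (ii) there exists $t_0>0$ such that $\mu_f$ is convex over $T$ (i.e., $\nabla_{xx}\mu_f(x,t)\succeq 0$ for all $(x,t)\in T$, equivalently $\mu_f(\cdot,t)$ is convex on $B[0,L]$ for every $t>t_0$); (iii) $\varphi_{\mathcal N}(\alpha,x)\ge 0$ for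 every $(\alpha,x)\in S_{n-r}\times B[0,L]$. Then (i) implies (ii), and (ii) implies (iii). (b) Assume $\lambda_n(C)>0$. Then there exists $t_0>0$ such that $\mu_f$ is convex over $T=B[0,L]\times(t_0,+\infty)$.
   Context: The Steklov function of a continuous $f:\mathbb{R}^n\to\mathbb{R}$ is $\mu_f(x,t)=\frac{1}{(2t)^n}\int_{x_n-t}^{x_n+t}\cdots\int_{x_1-t}^{x_1+t} f(\tau)\,d\tau_1\cdots d\tau_n$ for $x\in\mathbb{R}^n$, $t>0$; $\nabla_{xx}\mu_f$ denotes its Hessian with respect to $x$. $\|\cdot\|$ is the Euclidean norm, $S_p=\{\alpha\in\mathbb{R}^p:\|\alpha\|=1\}$ is the unit sphere in $\mathbb{R}^p$, and $N(C)$ is the null space of $C$. *)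

theory Defs
  imports "HOL-Analysis.Analysis"
begin

definition poly_fun_deg_le :: "nat \<Rightarrow> (real^'n \<Rightarrow> real) \<Rightarrow> bool" where
  "poly_fun_deg_le d f \<longleftrightarrow>
     (\<exists>E c. finite E \<and> (\<forall>a\<in>E. sum a UNIV \<le> d) \<and>
        f = (\<lambda>x. \<Sum>a\<in>E. c a * (\<Prod>i\<in>UNIV. (x $ i) ^ a i)))"

definition pderiv_i :: "'n \<Rightarrow> (real^'n \<Rightarrow> real) \<Rightarrow> real^'n \<Rightarrow> real" where
  "pderiv_i i g x = deriv (\<lambda>s. g (x + s *\<^sub>R axis i 1)) 0"

definition hess :: "(real^'n \<Rightarrow> real) \<Rightarrow> real^'n \<Rightarrow> real^'n^'n" where
  "hess g x = (\<chi> i j. pderiv_i i (pderiv_i j g) x)"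

definition psd :: "real^'n^'n \<Rightarrow> bool" where
  "psd A \<longleftrightarrow> (\<forall>v. 0 \<le> v \<bullet> (A *v v))"

definition steklov :: "(real^'n \<Rightarrow> real) \<Rightarrow> real^'n \<Rightarrow> real \<Rightarrow> real" where
  "steklov f x t = integral (cbox (x - (\<chi> i. t)) (x + (\<chi> i. t))) f / (2 * t) ^ CARD('n)"

definition null_space :: "real^'n^'n \<Rightarrow> (real^'n) set" where
  "null_space A = {x. A *v x = 0}"

end

theory Submission
  imports Defs
begin

lemma lborel_integral_prod:
  fixes f :: "'a::euclidean_space \<Rightarrow> real \<Rightarrow> real"
  assumes int: "\<And>b. b\<in>Basis \<Longrightarrow> integrable lborel (f b)"
  shows "(\<integral>x. (\<Prod>b\<in>Basis. f b (x \<bullet> b)) \<partial>lborel) = (\<Prod>b\<in>Basis. \<integral>x. f b x \<partial>lborel)"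
proof -
  interpret P: product_sigma_finite "\<lambda>_::'a. lborel::real measure"
    by standard
  have meas[measurable]: "\<And>b. b\<in>Basis \<Longrightarrow> f b \<in> borel_measurable borel"
    using int by auto
  have "(\<integral>x. (\<Prod>b\<in>Basis. f b (x \<bullet> b)) \<partial>lborel)
     = (\<integral>x. (\<Prod>b\<in>Basis. f b ((\<Sum>b'\<in>Basis. x b' *\<^sub>R b') \<bullet> b)) \<partial>(\<Pi>\<^sub>M b\<in>Basis. lborel))"
    apply (subst lborel_eq)
    apply (subst integral_distr)
      apply measurable
    done
  also have "\<dots> = (\<integral>x. (\<Prod>b\<in>Basis. f b (x b)) \<partial>(\<Pi>\<^sub>M b\<in>Basis. lborel))"
  apply (rule Bochner_Integration.integral_cong)
  apply simp
  apply (rule prod.cong[OF refl])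
  proof -
    fix x :: "'a \<Rightarrow> real" and b :: 'a assume b: "b \<in> Basis"
    have "(\<Sum>b'\<in>Basis. x b' *\<^sub>R b') \<bullet> b = (\<Sum>b'\<in>Basis. if b' = b then x b' else 0)"
      unfolding inner_sum_left by (intro sum.cong refl) (auto simp: inner_Basis b)
    also have "\<dots> = x b" using b by simp
    finally show "f b ((\<Sum>b'\<in>Basis. x b' *\<^sub>R b') \<bullet> b) = f b (x b)" by simp
  qed
  also have "\<dots> = (\<Prod>b\<in>Basis. \<integral>x. f b x \<partial>lborel)"
    by (rule P.product_integral_prod) (auto intro: int)
  finally show ?thesis .
qed

lemma integral_as_lborel:
  fixes h :: "'a::euclidean_space \<Rightarrow> real"
  assumes "continuous_on UNIV h"
  shows "integral (cbox l u) h = (\<integral>x. indicator (cbox l u) x * h x \<partial>lborel)"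
    and "integrable lborel (\<lambda>x. indicator (cbox l u) x * h x)"
proof -
  have c: "continuous_on (cbox l u) h" using assms continuous_on_subset by blast
  have ai: "set_integrable lebesgue (cbox l u) h"
    using absolutely_integrable_continuous[OF c] .
  have m: "(\<lambda>x. indicator (cbox l u) x * h x) \<in> borel_measurable lborel"
  proof -
    have "h \<in> borel_measurable borel" by (rule borel_measurable_continuous_onI[OF assms])
    then show ?thesis by simp
  qed
  have "integral (cbox l u) h = (LINT x:cbox l u|lebesgue. h x)"
    using set_lebesgue_integral_eq_integral(2)[OF ai] by simp
  also have "\<dots> = (\<integral>x. indicator (cbox l u) x * h x \<partial>lebesgue)"
    by (simp add: set_lebesgue_integral_def)
  also have "\<dots> = (\<integral>x. indicator (cbox l u) x * h x \<partial>lborel)"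
    using m by (simp add: integral_completion)
  finally show "integral (cbox l u) h = (\<integral>x. indicator (cbox l u) x * h x \<partial>lborel)" .
  show "integrable lborel (\<lambda>x. indicator (cbox l u) x * h x)"
    using ai m unfolding set_integrable_def by (simp add: integrable_completion)
qed

lemma integral_cbox_prod_eucl:
  fixes g :: "'a::euclidean_space \<Rightarrow> real \<Rightarrow> real"
  assumes cont: "\<And>b. b\<in>Basis \<Longrightarrow> continuous_on UNIV (g b)"
  shows "integral (cbox l u) (\<lambda>z. \<Prod>b\<in>Basis. g b (z\<bullet>b)) = (\<Prod>b\<in>Basis. integral {l\<bullet>b..u\<bullet>b} (g b))"
proof -
  have c1: "continuous_on UNIV (\<lambda>z. \<Prod>b\<in>Basis. g b (z\<bullet>b))"
    by (intro continuous_intros continuous_on_compose2[OF cont]) auto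
  have "integral (cbox l u) (\<lambda>z. \<Prod>b\<in>Basis. g b (z\<bullet>b))
      = (\<integral>x. indicator (cbox l u) x * (\<Prod>b\<in>Basis. g b (x\<bullet>b)) \<partial>lborel)"
    by (rule integral_as_lborel(1)[OF c1])
  also have "\<dots> = (\<integral>x. (\<Prod>b\<in>Basis. indicator {l\<bullet>b..u\<bullet>b} (x\<bullet>b) * g b (x\<bullet>b)) \<partial>lborel)"
  proof (rule Bochner_Integration.integral_cong[OF refl])
    fix x :: 'a
    have "indicator (cbox l u) x = (\<Prod>b\<in>Basis. indicator {l\<bullet>b..u\<bullet>b} (x\<bullet>b) :: real)"
      by (auto simp: indicator_def mem_box prod_zero_iff)
    then show "indicator (cbox l u) x * (\<Prod>b\<in>Basis. g b (x\<bullet>b)) = (\<Prod>b\<in>Basis. indicator {l\<bullet>b..u\<bullet>b} (x\<bullet>b) * g b (x\<bullet>b))"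
      by (simp add: prod.distrib)
  qed
  also have "\<dots> = (\<Prod>b\<in>Basis. \<integral>x. indicator {l\<bullet>b..u\<bullet>b} x * g b x \<partial>lborel)"
  proof (rule lborel_integral_prod)
    fix b :: 'a assume "b \<in> Basis"
    then show "integrable lborel (\<lambda>x. indicator {l\<bullet>b..u\<bullet>b} x * g b x)"
      using integral_as_lborel(2)[OF cont, of b "l\<bullet>b" "u\<bullet>b"] by simp
  qed
  also have "\<dots> = (\<Prod>b\<in>Basis. integral {l\<bullet>b..u\<bullet>b} (g b))"
    by (intro prod.cong refl) (use integral_as_lborel(1)[OF cont] in simp)
  finally show ?thesis .
qed

lemma Basis_cart_range: "(Basis :: (real^'n) set) = range (\<lambda>i. axis i 1)"
  by (auto simp: Basis_vec_def)

lemma prod_Basis_cart: "(\<Prod>b\<in>(Basis :: (real^'n) set). F b) = (\<Prod>i\<in>UNIV. F (axis i 1))"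
proof -
  have "inj (\<lambda>i::'n. axis i (1::real))" by (auto simp: inj_on_def axis_eq_axis)
  then show ?thesis unfolding Basis_cart_range by (simp add: prod.reindex)
qed

lemma integral_cbox_prod_cart:
  fixes g :: "'n::finite \<Rightarrow> real \<Rightarrow> real" and l u :: "real^'n"
  assumes cont: "\<And>i. continuous_on UNIV (g i)"
  shows "integral (cbox l u) (\<lambda>z. \<Prod>i\<in>UNIV. g i (z$i)) = (\<Prod>i\<in>UNIV. integral {l$i..u$i} (g i))"
proof -
  define G where "G b = g (THE i. axis i (1::real) = b)" for b :: "real^'n"
  have G: "G (axis i 1) = g i" for i
    unfolding G_def by (rule arg_cong[where f=g]) (auto simp: axis_eq_axis)
  have "integral (cbox l u) (\<lambda>z. \<Prod>b\<in>Basis. G b (z\<bullet>b)) = (\<Prod>b\<in>Basis. integral {l\<bullet>b..u\<bullet>b} (G b))"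
    by (rule integral_cbox_prod_eucl) (auto simp: Basis_cart_range G cont)
  then show ?thesis by (simp add: prod_Basis_cart G inner_axis)
qed

definition mnm :: "('n \<Rightarrow> nat) \<Rightarrow> real^'n \<Rightarrow> real" where
  "mnm a x = (\<Prod>i\<in>UNIV. (x$i)^(a i))"

definition dq :: "nat \<Rightarrow> real" where "dq k = real (k*(k-1)) / 6"
definition eq4 :: "nat \<Rightarrow> real" where "eq4 k = (if k = 4 then 1/5 else 0)"
definition Qf :: "nat \<Rightarrow> real \<Rightarrow> real \<Rightarrow> real" where
  "Qf k y t = y^k + t^2 * dq k * y^(k-2) + t^4 * eq4 k"

lemma mono_remove: "mnm a y = (y$k)^(a k) * (\<Prod>i\<in>UNIV-{k}. (y$i)^(a i))"
  unfolding mnm_def by (simp add: prod.remove)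

lemma mono_upd: "mnm (a(k:=m)) y = (y$k)^m * (\<Prod>i\<in>UNIV-{k}. (y$i)^(a i))"
  unfolding mono_remove[of _ _ k] by (auto intro!: prod.cong)

lemma sum_ge2_rest:
  fixes a :: "'n::finite \<Rightarrow> nat"
  assumes deg: "sum a UNIV \<le> 4" and X: "\<forall>i\<in>X. 2 \<le> a i" and cX: "2 \<le> card X"
  shows "\<forall>i\<in>X. a i = 2" "\<forall>i. i \<notin> X \<longrightarrow> a i = 0"
proof -
  have "sum a UNIV = sum a X + sum a (UNIV - X)"
    by (simp add: sum.subset_diff[of X UNIV])
  moreover have "sum (\<lambda>_. 2) X \<le> sum a X" using X by (intro sum_mono) auto
  moreover have "sum (\<lambda>_. 2::nat) X = 2 * card X" by simp
  ultimately have h: "sum a (UNIV - X) = 0" "sum a X = 2 * card X" "card X = 2" using deg cX by linarith+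
  show "\<forall>i. i \<notin> X \<longrightarrow> a i = 0" using h(1) by auto
  have "sum (\<lambda>i. a i - 2) X = sum a X - sum (\<lambda>_. 2) X"
    using X by (subst sum_subtractf_nat) auto
  then have "sum (\<lambda>i. a i - 2) X = 0" using h by simp
  then have "\<forall>i\<in>X. a i \<le> 2" by (auto simp: sum_eq_0_iff)
  then show "\<forall>i\<in>X. a i = 2" using X by (auto intro: le_antisym)
qed

lemma only_one:
  fixes a :: "'n::finite \<Rightarrow> nat"
  assumes deg: "sum a UNIV \<le> 4" and "a k = 4"
  shows "\<forall>i. i \<noteq> k \<longrightarrow> a i = 0"
proof -
  have "sum a UNIV = a k + sum a (UNIV - {k})" by (simp add: sum.remove)
  then have "sum a (UNIV - {k}) = 0" using assms by simp
  then show ?thesis by auto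
qed

lemma Qprod_expand:
  fixes a :: "'n::finite \<Rightarrow> nat"
  assumes deg: "sum a UNIV \<le> 4" and ak: "\<forall>i. a i \<le> 4"
  shows "(\<Prod>i\<in>UNIV. Qf (a i) (y$i) t) - mnm a y - t^2 * (\<Sum>k\<in>UNIV. dq (a k) * mnm (a(k := a k - 2)) y)
       = (\<Prod>i\<in>UNIV. Qf (a i) (y'$i) t) - mnm a y' - t^2 * (\<Sum>k\<in>UNIV. dq (a k) * mnm (a(k := a k - 2)) y')"
proof -
  define w where "w y i = t^2 * dq (a i) * (y$i)^(a i - 2) + t^4 * eq4 (a i)" for y :: "real^'n" and i
  define m where "m y i = (y$i)^(a i)" for y :: "real^'n" and i
  define T where "T y X = (\<Prod>i\<in>X. w y i) * (\<Prod>i\<in>UNIV - X. m y i)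
     - (if X = {} then mnm a y else 0)
     - (\<Sum>k\<in>UNIV. if X = {k} then t^2 * dq (a k) * mnm (a(k := a k - 2)) y else 0)" for y X
  have wz: "w y i = 0" if "a i < 2" for y i
    using that unfolding w_def dq_def eq4_def by (cases "a i"; cases "a i - 1") auto
  have main: "(\<Prod>i\<in>UNIV. Qf (a i) (y$i) t) - mnm a y - t^2 * (\<Sum>k\<in>UNIV. dq (a k) * mnm (a(k := a k - 2)) y)
     = (\<Sum>X\<in>Pow UNIV. T y X)" for y
  proof -
    have "(\<Prod>i\<in>UNIV. Qf (a i) (y$i) t) = (\<Prod>i\<in>UNIV. w y i + m y i)"
      by (simp add: Qf_def w_def m_def algebra_simps)
    also have "\<dots> = (\<Sum>X\<in>Pow UNIV. (\<Prod>i\<in>X. w y i) * (\<Prod>i\<in>UNIV - X. m y i))"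
      by (rule prod_add) simp
    finally have 1: "(\<Prod>i\<in>UNIV. Qf (a i) (y$i) t) = \<dots>" .
    have 2: "(\<Sum>X\<in>Pow (UNIV::'n set). (if X = {} then mnm a y else 0)) = mnm a y"
      by (rule trans[OF sum.delta]) (auto intro: finite_Pow_iff[THEN iffD2])
    have 3: "(\<Sum>X\<in>Pow (UNIV::'n set). \<Sum>k\<in>UNIV. if X = {k} then t^2 * dq (a k) * mnm (a(k := a k - 2)) y else 0)
        = t^2 * (\<Sum>k\<in>UNIV. dq (a k) * mnm (a(k := a k - 2)) y)"
      by (subst sum.swap) (simp add: sum.delta sum_distrib_left mult.assoc)
    show ?thesis unfolding T_def sum_subtractf 1 2 3 ..
  qed
  have indep: "T y X = T y' X" for X
  proof (cases "X = {}")
    case True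
    then show ?thesis unfolding T_def by (simp add: m_def mnm_def)
  next
    case False
    show ?thesis
    proof (cases "\<exists>k. X = {k}")
      case True
      then obtain k where X: "X = {k}" by blast
      have "T z X = t^4 * eq4 (a k) * (\<Prod>i\<in>UNIV - {k}. m z i)" for z
      proof -
        have s: "(\<Sum>j\<in>UNIV. if {k} = {j} then t^2 * dq (a j) * mnm (a(j := a j - 2)) z else 0)
              = t^2 * dq (a k) * mnm (a(k := a k - 2)) z"
          by (simp add: sum.delta)
        show ?thesis unfolding T_def X using s
          by (simp add: w_def mono_upd m_def algebra_simps)
      qed
      moreover have "t^4 * eq4 (a k) * (\<Prod>i\<in>UNIV - {k}. m y i) = t^4 * eq4 (a k) * (\<Prod>i\<in>UNIV - {k}. m y' i)"
      proof (cases "a k = 4")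
        case True
        then have "\<forall>i. i \<noteq> k \<longrightarrow> a i = 0" using only_one[OF deg] by blast
        then show ?thesis by (auto simp: m_def intro!: prod.cong)
      qed (simp add: eq4_def)
      ultimately show ?thesis by simp
    next
      case False2: False
      have cX: "2 \<le> card X"
      proof -
        have "card X \<noteq> 0" using \<open>X \<noteq> {}\<close> by simp
        moreover have "card X \<noteq> 1" using False2 by (auto simp: card_1_singleton_iff)
        ultimately show ?thesis by linarith
      qed
      have Ts: "T z X = (\<Prod>i\<in>X. w z i) * (\<Prod>i\<in>UNIV - X. m z i)" for z
        unfolding T_def using \<open>X \<noteq> {}\<close> False2 by (auto intro!: sum.neutral)
      show ?thesis
      proof (cases "\<forall>i\<in>X. 2 \<le> a i")
        case True
        note r = sum_ge2_rest[OF deg True cX]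
        have "(\<Prod>i\<in>X. w y i) = (\<Prod>i\<in>X. w y' i)" using r(1) by (auto simp: w_def intro!: prod.cong)
        moreover have "(\<Prod>i\<in>UNIV - X. m y i) = (\<Prod>i\<in>UNIV - X. m y' i)" using r(2) by (auto simp: m_def intro!: prod.cong)
        ultimately show ?thesis unfolding Ts by simp
      next
        case False
        then obtain i where "i \<in> X" "a i < 2" by auto
        then have z0: "(\<Prod>i\<in>X. w z i) = 0" for z using wz by (auto intro: prod_zero)
        show ?thesis unfolding Ts z0 by simp
      qed
    qed
  qed
  show ?thesis unfolding main using indep by simp
qed

definition ld :: "(real^'n \<Rightarrow> real) \<Rightarrow> bool" where
  "ld g \<longleftrightarrow> (\<forall>x j. ((\<lambda>s. g (x + s *\<^sub>R axis j 1)) has_real_derivative pderiv_i j g x) (at 0))"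

lemma ld_intro:
  assumes "\<And>x j. ((\<lambda>s. g (x + s *\<^sub>R axis j 1)) has_real_derivative g' j x) (at 0)"
  shows "ld g" "pderiv_i j g = g' j"
proof -
  have e: "pderiv_i j g x = g' j x" for j x
    unfolding pderiv_i_def by (rule DERIV_imp_deriv[OF assms])
  then show "pderiv_i j g = g' j" by auto
  show "ld g" unfolding ld_def e using assms by auto
qed

lemma ldD: "ld g \<Longrightarrow> ((\<lambda>s. g (x + s *\<^sub>R axis j 1)) has_real_derivative pderiv_i j g x) (at 0)"
  unfolding ld_def by auto

lemma ld_sum:
  assumes "finite I" "\<And>k. k \<in> I \<Longrightarrow> ld (G k)"
  shows "ld (\<lambda>x. \<Sum>k\<in>I. G k x)" "pderiv_i j (\<lambda>x. \<Sum>k\<in>I. G k x) = (\<lambda>x. \<Sum>k\<in>I. pderiv_i j (G k) x)"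
proof -
  have d: "((\<lambda>s. \<Sum>k\<in>I. G k (x + s *\<^sub>R axis j 1)) has_real_derivative (\<Sum>k\<in>I. pderiv_i j (G k) x)) (at 0)" for x j
    by (rule DERIV_sum) (use assms ldD in blast)
  show "ld (\<lambda>x. \<Sum>k\<in>I. G k x)" "pderiv_i j (\<lambda>x. \<Sum>k\<in>I. G k x) = (\<lambda>x. \<Sum>k\<in>I. pderiv_i j (G k) x)"
    using ld_intro[of "\<lambda>x. \<Sum>k\<in>I. G k x" "\<lambda>j x. \<Sum>k\<in>I. pderiv_i j (G k) x", OF d] by auto
qed

lemma ld_lin:
  assumes "ld g1" "ld g2"
  shows "ld (\<lambda>x. g1 x + a * g2 x + K)" "pderiv_i j (\<lambda>x. g1 x + a * g2 x + K) = (\<lambda>x. pderiv_i j g1 x + a * pderiv_i j g2 x)"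
proof -
  have d: "((\<lambda>s. g1 (x + s *\<^sub>R axis j 1) + a * g2 (x + s *\<^sub>R axis j 1) + K) has_real_derivative (pderiv_i j g1 x + a * pderiv_i j g2 x)) (at 0)" for x j
    using ldD[OF assms(1)] ldD[OF assms(2)] by (auto intro!: derivative_eq_intros)
  show "ld (\<lambda>x. g1 x + a * g2 x + K)" "pderiv_i j (\<lambda>x. g1 x + a * g2 x + K) = (\<lambda>x. pderiv_i j g1 x + a * pderiv_i j g2 x)"
    using ld_intro[of "\<lambda>x. g1 x + a * g2 x + K" "\<lambda>j x. pderiv_i j g1 x + a * pderiv_i j g2 x", OF d] by auto
qed

lemma mono_line: "mnm b (x + s *\<^sub>R axis j 1) = (x$j + s)^(b j) * (\<Prod>i\<in>UNIV-{j}. (x$i)^(b i))"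
  unfolding mono_remove[of _ _ j] by (auto simp: axis_def intro!: prod.cong)

lemma mono_deriv:
  "((\<lambda>s. mnm b (x + s *\<^sub>R axis j 1)) has_real_derivative (real (b j) * mnm (b(j:= b j - 1)) x)) (at 0)"
proof -
  have "((\<lambda>s. (x$j + s)^(b j) * (\<Prod>i\<in>UNIV-{j}. (x$i)^(b i))) has_real_derivative
        (real (b j) * (x$j + 0)^(b j - 1) * 1) * (\<Prod>i\<in>UNIV-{j}. (x$i)^(b i))) (at 0)"
    by (intro derivative_eq_intros refl) auto
  then show ?thesis unfolding mono_line mono_upd by (simp add: mult.assoc)
qed

definition pol :: "(real^'n \<Rightarrow> real) \<Rightarrow> bool" where
  "pol g \<longleftrightarrow> (\<exists>E c h. finite (E :: ('n \<Rightarrow> nat) set) \<and> g = (\<lambda>x. \<Sum>e\<in>E. c e * mnm (h e) x))"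

lemma pol_pderiv:
  assumes "finite E"
  shows "ld (\<lambda>x. \<Sum>e\<in>E. c e * mnm (h e) x)"
    "pderiv_i j (\<lambda>x. \<Sum>e\<in>E. c e * mnm (h e) x) = (\<lambda>x. \<Sum>e\<in>E. (c e * real (h e j)) * mnm ((h e)(j := h e j - 1)) x)"
proof -
  have d: "((\<lambda>s. \<Sum>e\<in>E. c e * mnm (h e) (x + s *\<^sub>R axis j 1)) has_real_derivative
      (\<Sum>e\<in>E. (c e * real (h e j)) * mnm ((h e)(j := h e j - 1)) x)) (at 0)" for x j
    by (rule DERIV_sum) (simp only: mult.assoc, rule DERIV_cmult, rule mono_deriv)
  show "ld (\<lambda>x. \<Sum>e\<in>E. c e * mnm (h e) x)"
    "pderiv_i j (\<lambda>x. \<Sum>e\<in>E. c e * mnm (h e) x) = (\<lambda>x. \<Sum>e\<in>E. (c e * real (h e j)) * mnm ((h e)(j := h e j - 1)) x)"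
    by (rule ld_intro[OF d])+
qed

lemma pol_ld: fixes g :: "real^'n \<Rightarrow> real" shows "pol g \<Longrightarrow> ld g"
proof -
  assume "pol g"
  then obtain E c h where E: "finite (E :: ('n \<Rightarrow> nat) set)" and g: "g = (\<lambda>x. \<Sum>e\<in>E. c e * mnm (h e) x)"
    unfolding pol_def by blast
  show ?thesis unfolding g by (rule pol_pderiv(1)[OF E])
qed

lemma pol_pderiv_pol: fixes g :: "real^'n \<Rightarrow> real" shows "pol g \<Longrightarrow> pol (pderiv_i j g)"
proof -
  assume "pol g"
  then obtain E c h where E: "finite (E :: ('n \<Rightarrow> nat) set)" and g: "g = (\<lambda>x. \<Sum>e\<in>E. c e * mnm (h e) x)"
    unfolding pol_def by blast
  show ?thesis unfolding pol_def g pol_pderiv(2)[OF E]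
    by (rule exI[of _ E], rule exI, rule exI, rule conjI[OF E refl])
qed

lemma mono_cont: "continuous_on S (mnm b)"
  unfolding mnm_def by (intro continuous_intros)

lemma pol_cont: fixes g :: "real^'n \<Rightarrow> real" shows "pol g \<Longrightarrow> continuous_on S g"
proof -
  assume "pol g"
  then obtain E c h where E: "finite (E :: ('n \<Rightarrow> nat) set)" and g: "g = (\<lambda>x. \<Sum>e\<in>E. c e * mnm (h e) x)"
    unfolding pol_def by blast
  show ?thesis unfolding g
    by (intro continuous_on_sum continuous_on_mult continuous_on_const mono_cont)
qed

lemma int_pow:
  assumes t: "t > 0" and k: "k \<le> 4"
  shows "integral {y-t..y+t} (\<lambda>s. s^k) = 2*t*Qf k y t"
proof -
  have "((\<lambda>s. s^k) has_integral ((y+t)^Suc k / Suc k - (y-t)^Suc k / Suc k)) {y-t..y+t}"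
  proof (rule fundamental_theorem_of_calculus)
    show "y - t \<le> y + t" using t by simp
    fix x
    show "((\<lambda>s. s^Suc k / Suc k) has_vector_derivative x^k) (at x within {y-t..y+t})"
      unfolding has_real_derivative_iff_has_vector_derivative[symmetric]
    proof -
      have "((\<lambda>s. s^Suc k / Suc k) has_real_derivative (real (Suc k) * x^(Suc k - Suc 0)) / real (Suc k)) (at x within {y-t..y+t})"
        by (intro DERIV_cdivide DERIV_pow)
      then show "((\<lambda>s. s^Suc k / Suc k) has_real_derivative x^k) (at x within {y-t..y+t})"
        by (simp del: of_nat_Suc)
    qed
  qed
  then have i: "integral {y-t..y+t} (\<lambda>s. s^k) = (y+t)^Suc k / Suc k - (y-t)^Suc k / Suc k"
    by (rule integral_unique)
  have "k = 0 \<or> k = 1 \<or> k = 2 \<or> k = 3 \<or> k = 4" using k by auto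
  then show ?thesis unfolding i
  proof (elim disjE)
    assume k4: "k = 4"
    show "(y + t) ^ Suc k / real (Suc k) - (y - t) ^ Suc k / real (Suc k) = 2 * t * Qf k y t"
      apply (simp add: k4 Qf_def dq_def eq4_def field_simps)
      by (simp add: eval_nat_numeral algebra_simps)
  qed (simp_all add: Qf_def dq_def eq4_def field_simps power2_eq_square power3_eq_cube power4_eq_xxxx)
qed

lemma steklov_mono:
  fixes a :: "'n::finite \<Rightarrow> nat"
  assumes t: "t > 0" and a: "\<forall>i. a i \<le> 4"
  shows "steklov (mnm a) y t = (\<Prod>i\<in>UNIV. Qf (a i) (y$i) t)"
proof -
  have m: "mnm a = (\<lambda>z. \<Prod>i\<in>UNIV. (\<lambda>s. s^(a i)) (z$i))" by (simp add: mnm_def[abs_def])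
  have "integral (cbox (y - (\<chi> i. t)) (y + (\<chi> i. t))) (mnm a)
      = (\<Prod>i\<in>UNIV. integral {(y - (\<chi> i. t))$i..(y + (\<chi> i. t))$i} (\<lambda>s. s^(a i)))"
    unfolding m by (rule integral_cbox_prod_cart) (intro continuous_intros)
  also have "\<dots> = (\<Prod>i\<in>UNIV. 2*t*Qf (a i) (y$i) t)"
    using int_pow[OF t] a by simp
  also have "\<dots> = (2*t)^CARD('n) * (\<Prod>i\<in>UNIV. Qf (a i) (y$i) t)"
    by (simp add: prod.distrib)
  finally show ?thesis unfolding steklov_def using t by simp
qed

lemma steklov_lin:
  fixes E :: "('n::finite \<Rightarrow> nat) set"
  assumes "finite E"
  shows "steklov (\<lambda>x. \<Sum>e\<in>E. c e * mnm e x) y t = (\<Sum>e\<in>E. c e * steklov (mnm e) y t)"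
proof -
  let ?S = "cbox (y - (\<chi> i. t)) (y + (\<chi> i. t))"
  have int: "(\<lambda>x. c e * mnm e x) integrable_on ?S" for e
    by (intro integrable_continuous continuous_intros mono_cont)
  have "integral ?S (\<lambda>x. \<Sum>e\<in>E. c e * mnm e x) = (\<Sum>e\<in>E. integral ?S (\<lambda>x. c e * mnm e x))"
    by (rule integral_sum[OF assms int])
  also have "\<dots> = (\<Sum>e\<in>E. c e * integral ?S (mnm e))"
    by (simp add: integral_mult_right)
  finally show ?thesis unfolding steklov_def by (simp add: sum_divide_distrib)
qed

lemma hess_steklov:
  fixes f :: "real^'n::finite \<Rightarrow> real"
  assumes poly: "poly_fun_deg_le 4 f" and t: "t > 0"
  shows "hess (\<lambda>y. steklov f y t) x = hess f x + (t^2/6) *\<^sub>R (\<Sum>k\<in>UNIV. hess (pderiv_i k (pderiv_i k f)) x)"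
proof -
  obtain E c where E: "finite E" and deg: "\<forall>a\<in>E. sum a UNIV \<le> 4"
    and f0: "f = (\<lambda>x. \<Sum>a\<in>E. c a * (\<Prod>i\<in>UNIV. (x $ i) ^ a i))"
    using poly unfolding poly_fun_deg_le_def by blast
  have f_eq: "f = (\<lambda>x. \<Sum>a\<in>E. c a * mnm a x)" unfolding f0 mnm_def ..
  have a4: "\<forall>i. a i \<le> 4" if "a \<in> E" for a
  proof
    fix i
    have "a i \<le> sum a UNIV" by (rule member_le_sum) auto
    then show "a i \<le> 4" using deg that by auto
  qed
  define F2 where "F2 k = pderiv_i k (pderiv_i k f)" for k
  have pf: "pol f" unfolding pol_def f_eq
    by (rule exI[of _ E], rule exI[of _ c], rule exI[of _ "\<lambda>e. e"]) (simp add: E)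
  have d1: "pderiv_i k f = (\<lambda>x. \<Sum>a\<in>E. (c a * real (a k)) * mnm (a(k := a k - 1)) x)" for k
    using pol_pderiv(2)[OF E, where c=c and h="\<lambda>e. e" and j=k] unfolding f_eq by simp
  have F2_eq: "F2 k = (\<lambda>x. \<Sum>a\<in>E. (c a * real (a k) * real (a k - 1)) * mnm (a(k := a k - 2)) x)" for k
    using pol_pderiv(2)[OF E, where c="\<lambda>a. c a * real (a k)" and h="\<lambda>a. a(k := a k - 1)" and j=k]
    unfolding F2_def d1 by (simp add: numeral_2_eq_2)
  have pF2: "pol (F2 k)" for k unfolding F2_def by (intro pol_pderiv_pol pf)
  define G where "G y = (\<Sum>k\<in>UNIV. F2 k y)" for y
  define Ka where "Ka a = (\<Prod>i\<in>UNIV. Qf (a i) ((0::real^'n)$i) t) - mnm a 0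
                 - t^2 * (\<Sum>k\<in>UNIV. dq (a k) * mnm (a(k := a k - 2)) 0)" for a
  define K where "K = (\<Sum>a\<in>E. c a * Ka a)"
  have stek: "steklov f y t = f y + (t^2/6) * G y + K" for y
  proof -
    have "steklov f y t = (\<Sum>a\<in>E. c a * (\<Prod>i\<in>UNIV. Qf (a i) (y$i) t))"
      unfolding f_eq steklov_lin[OF E] by (rule sum.cong[OF refl]) (simp add: steklov_mono[OF t a4])
    also have "\<dots> = (\<Sum>a\<in>E. c a * (mnm a y + t^2 * (\<Sum>k\<in>UNIV. dq (a k) * mnm (a(k := a k - 2)) y) + Ka a))"
    proof (intro sum.cong refl arg_cong[where f="\<lambda>z. c _ * z"])
      fix a assume "a \<in> E"
      then show "(\<Prod>i\<in>UNIV. Qf (a i) (y$i) t) = mnm a y + t^2 * (\<Sum>k\<in>UNIV. dq (a k) * mnm (a(k := a k - 2)) y) + Ka a"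
        using Qprod_expand[of a y t 0] deg a4 unfolding Ka_def by (simp add: algebra_simps)
    qed
    also have "\<dots> = (\<Sum>a\<in>E. c a * mnm a y + t^2 * (\<Sum>k\<in>UNIV. c a * dq (a k) * mnm (a(k := a k - 2)) y) + c a * Ka a)"
      by (intro sum.cong refl) (simp add: algebra_simps sum_distrib_left)
    also have "\<dots> = f y + t^2 * (\<Sum>a\<in>E. \<Sum>k\<in>UNIV. c a * dq (a k) * mnm (a(k := a k - 2)) y) + K"
      unfolding f_eq K_def by (simp add: sum.distrib sum_distrib_left)
    also have "(\<Sum>a\<in>E. \<Sum>k\<in>UNIV. c a * dq (a k) * mnm (a(k := a k - 2)) y) = G y / 6"
    proof -
      have pt: "c a * dq (a k) * m = c a * real (a k) * real (a k - 1) * m / 6" for a k m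
        by (simp only: dq_def of_nat_mult) simp
      show ?thesis unfolding pt G_def F2_eq by (subst sum.swap) (simp add: sum_divide_distrib)
    qed
    finally show ?thesis by simp
  qed
  have ldf: "ld f" by (rule pol_ld[OF pf])
  have ldF2: "ld (F2 k)" for k by (rule pol_ld[OF pF2])
  have ldG: "ld G" unfolding G_def[abs_def] by (rule ld_sum) (auto intro: ldF2)
  have dG: "pderiv_i j G = (\<lambda>y. \<Sum>k\<in>UNIV. pderiv_i j (F2 k) y)" for j
    unfolding G_def[abs_def] by (rule ld_sum) (auto intro: ldF2)
  have ldf1: "ld (pderiv_i j f)" for j by (rule pol_ld[OF pol_pderiv_pol[OF pf]])
  have ldG1: "ld (pderiv_i j G)" for j unfolding dG
    by (rule ld_sum) (auto intro: pol_ld pol_pderiv_pol pF2)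
  have dG2: "pderiv_i i (pderiv_i j G) = (\<lambda>y. \<Sum>k\<in>UNIV. pderiv_i i (pderiv_i j (F2 k)) y)" for i j
    unfolding dG by (rule ld_sum) (auto intro: pol_ld pol_pderiv_pol pF2)
  have sfun: "(\<lambda>y. steklov f y t) = (\<lambda>y. f y + (t^2/6) * G y + K)" using stek by auto
  have d1s: "pderiv_i j (\<lambda>y. steklov f y t) = (\<lambda>y. pderiv_i j f y + (t^2/6) * pderiv_i j G y)" for j
    unfolding sfun by (rule ld_lin(2)[OF ldf ldG])
  have d2s: "pderiv_i i (pderiv_i j (\<lambda>y. steklov f y t)) = (\<lambda>y. pderiv_i i (pderiv_i j f) y + (t^2/6) * pderiv_i i (pderiv_i j G) y)" for i j
    using ld_lin(2)[OF ldf1 ldG1, where a="t^2/6" and K=0 and j=i] unfolding d1s by simp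
  show ?thesis
    unfolding hess_def d2s dG2
    by (simp add: vec_eq_iff sum_component F2_def sum_distrib_left)
qed

lemma poly_pol:
  fixes f :: "real^'n::finite \<Rightarrow> real"
  assumes "poly_fun_deg_le d f"
  shows "pol f"
proof -
  obtain E c where E: "finite E" and f0: "f = (\<lambda>x. \<Sum>a\<in>E. c a * (\<Prod>i\<in>UNIV. (x $ i) ^ a i))"
    using assms unfolding poly_fun_deg_le_def by blast
  have f_eq: "f = (\<lambda>x. \<Sum>a\<in>E. c a * mnm ((\<lambda>e. e) a) x)" unfolding f0 mnm_def by simp
  show ?thesis unfolding pol_def f_eq
    by (rule exI[of _ E], rule exI[of _ c], rule exI[of _ "\<lambda>e. e"]) (simp add: E)
qed

lemma hess_cont:
  fixes f :: "real^'n::finite \<Rightarrow> real"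
  assumes "poly_fun_deg_le d f"
  shows "continuous_on S (\<lambda>x. hess f x $ i $ j)"
  unfolding hess_def using pol_cont[OF pol_pderiv_pol[OF pol_pderiv_pol[OF poly_pol[OF assms]]]] by simp

definition ONB :: "(nat \<Rightarrow> real^'n) \<Rightarrow> bool" where
  "ONB v \<longleftrightarrow> (\<forall>i\<in>{1..CARD('n)}. \<forall>j\<in>{1..CARD('n)}. v i \<bullet> v j = (if i = j then 1 else 0))"

lemma ONB_D: "ONB v \<Longrightarrow> i \<in> {1..CARD('n)} \<Longrightarrow> j \<in> {1..CARD('n)} \<Longrightarrow> v i \<bullet> v j = (if i = j then 1 else 0)"
  for v :: "nat \<Rightarrow> real^'n"
  unfolding ONB_def by blast

lemma ONB_expand:
  fixes v :: "nat \<Rightarrow> real^'n"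
  assumes on: "ONB v"
  shows "w = (\<Sum>i\<in>{1..CARD('n)}. (w \<bullet> v i) *\<^sub>R v i)"
proof -
  let ?I = "{1..CARD('n)}"
  have inj: "inj_on v ?I"
  proof (rule inj_onI)
    fix i j assume ij: "i \<in> ?I" "j \<in> ?I" "v i = v j"
    then have "v i \<bullet> v j = 1" using ONB_D[OF on, of i i] by simp
    then show "i = j" using ONB_D[OF on ij(1,2)] by (auto split: if_splits)
  qed
  have ind: "independent (v ` ?I)"
  proof (rule pairwise_orthogonal_independent)
    show "pairwise orthogonal (v ` ?I)"
      unfolding pairwise_def orthogonal_def using ONB_D[OF on] by auto
    show "0 \<notin> v ` ?I"
    proof
      assume "0 \<in> v ` ?I"
      then obtain i where "i \<in> ?I" "v i = 0" by auto
      then show False using ONB_D[OF on, of i i] by simp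
    qed
  qed
  have card: "card (v ` ?I) = CARD('n)" using card_image[OF inj] by simp
  have sp: "UNIV \<subseteq> span (v ` ?I)"
    by (rule card_ge_dim_independent[OF _ ind]) (use card in simp_all)
  define u where "u = w - (\<Sum>i\<in>?I. (w \<bullet> v i) *\<^sub>R v i)"
  have uo: "u \<bullet> v j = 0" if j: "j \<in> ?I" for j
  proof -
    have "(\<Sum>i\<in>?I. (w \<bullet> v i) *\<^sub>R v i) \<bullet> v j = (\<Sum>i\<in>?I. (w \<bullet> v i) * (if i = j then 1 else 0))"
      unfolding inner_sum_left by (intro sum.cong refl) (simp add: ONB_D[OF on _ j])
    also have "\<dots> = w \<bullet> v j" using j by (simp add: if_distrib cong: if_cong)
    finally show ?thesis unfolding u_def by (simp add: inner_diff_left)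
  qed
  have "orthogonal u u"
    by (rule orthogonal_to_span[of u "v ` ?I" u]) (use sp uo in \<open>auto simp: orthogonal_def\<close>)
  then have "u = 0" by (simp add: orthogonal_def)
  then show ?thesis unfolding u_def by simp
qed

lemma ONB_inner:
  fixes v :: "nat \<Rightarrow> real^'n"
  assumes on: "ONB v"
  shows "w \<bullet> w' = (\<Sum>i\<in>{1..CARD('n)}. (w \<bullet> v i) * (w' \<bullet> v i))"
proof -
  have "w \<bullet> w' = (\<Sum>i\<in>{1..CARD('n)}. (w \<bullet> v i) *\<^sub>R v i) \<bullet> w'"
    using ONB_expand[OF on, of w] by simp
  also have "\<dots> = (\<Sum>i\<in>{1..CARD('n)}. (w \<bullet> v i) * (w' \<bullet> v i))"
    unfolding inner_sum_left inner_scaleR_left by (simp add: inner_commute[of w'])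
  finally show ?thesis .
qed

lemma mv_sum: "(A::real^'n^'m) *v (\<Sum>i\<in>I. c i *\<^sub>R x i) = (\<Sum>i\<in>I. c i *\<^sub>R (A *v x i))"
proof -
  have l: "linear (\<lambda>x. A *v x)" by simp
  show ?thesis by (simp add: linear_sum[OF l] linear_scale[OF l])
qed

lemma eig_apply:
  fixes v :: "nat \<Rightarrow> real^'n" and C :: "real^'n^'n"
  assumes on: "ONB v" and eig: "\<forall>i\<in>{1..CARD('n)}. C *v v i = lam i *\<^sub>R v i"
  shows "C *v w = (\<Sum>i\<in>{1..CARD('n)}. (lam i * (w \<bullet> v i)) *\<^sub>R v i)"
proof -
  have "C *v w = C *v (\<Sum>i\<in>{1..CARD('n)}. (w \<bullet> v i) *\<^sub>R v i)"
    using ONB_expand[OF on, of w] by simp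
  also have "\<dots> = (\<Sum>i\<in>{1..CARD('n)}. (lam i * (w \<bullet> v i)) *\<^sub>R v i)"
    unfolding mv_sum by (intro sum.cong refl) (simp add: eig)
  finally show ?thesis .
qed

lemma eig_quad:
  fixes v :: "nat \<Rightarrow> real^'n" and C :: "real^'n^'n"
  assumes on: "ONB v" and eig: "\<forall>i\<in>{1..CARD('n)}. C *v v i = lam i *\<^sub>R v i"
  shows "w \<bullet> (C *v w) = (\<Sum>i\<in>{1..CARD('n)}. lam i * (w \<bullet> v i)^2)"
  unfolding eig_apply[OF on eig]
  by (simp add: inner_sum_right power2_eq_square mult.commute mult.left_commute)

lemma partial_sum:
  fixes v :: "nat \<Rightarrow> real^'n"
  assumes on: "ONB v" and P: "P \<subseteq> {1..CARD('n)}" and j: "j \<in> {1..CARD('n)}"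
  shows "(\<Sum>i\<in>P. c i *\<^sub>R v i) \<bullet> v j = (if j \<in> P then c j else 0)"
proof -
  have fP: "finite P" using P finite_subset by blast
  have "(\<Sum>i\<in>P. c i *\<^sub>R v i) \<bullet> v j = (\<Sum>i\<in>P. if i = j then c i else 0)"
    unfolding inner_sum_left by (intro sum.cong refl) (use P ONB_D[OF on _ j] in auto)
  also have "\<dots> = (if j \<in> P then c j else 0)" using fP by (simp add: sum.delta')
  finally show ?thesis .
qed

lemma partial_norm:
  fixes v :: "nat \<Rightarrow> real^'n"
  assumes on: "ONB v" and P: "P \<subseteq> {1..CARD('n)}"
  shows "(\<Sum>i\<in>P. c i *\<^sub>R v i) \<bullet> (\<Sum>i\<in>P. c i *\<^sub>R v i) = (\<Sum>i\<in>P. (c i)^2)"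
proof -
  have "(\<Sum>i\<in>P. c i *\<^sub>R v i) \<bullet> (\<Sum>i\<in>P. c i *\<^sub>R v i) = (\<Sum>j\<in>P. c j * ((\<Sum>i\<in>P. c i *\<^sub>R v i) \<bullet> v j))"
    by (simp add: inner_sum_right)
  also have "\<dots> = (\<Sum>j\<in>P. (c j)^2)"
    by (intro sum.cong refl) (use P partial_sum[OF on P] in \<open>auto simp: power2_eq_square\<close>)
  finally show ?thesis .
qed

lemma quad_final:
  fixes a b M d X :: real
  assumes "d > 0" "M \<ge> 0" "X \<ge> M + M^2/d" "a \<ge> 0" "b \<ge> 0"
  shows "0 \<le> X * a^2 - M * a^2 - 2 * M * a * b + d * b^2"
proof -
  have "X * a^2 \<ge> (M + M^2/d) * a^2" using assms by (intro mult_right_mono) auto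
  moreover have "(M^2/d) * a^2 - 2 * M * a * b + d * b^2 = (M * a - d * b)^2 / d"
    using assms(1) by (simp add: field_simps power2_eq_square)
  moreover have "(M * a - d * b)^2 / d \<ge> 0" using assms(1) by simp
  ultimately show ?thesis by (simp add: algebra_simps)
qed

lemma core:
  fixes v :: "nat \<Rightarrow> real^'n" and C :: "real^'n^'n" and A :: "'x \<Rightarrow> real^'n^'n"
  assumes on: "ONB v" and eig: "\<forall>i\<in>{1..CARD('n)}. C *v v i = lam i *\<^sub>R v i"
    and P: "P \<subseteq> {1..CARD('n)}" and lmP: "\<forall>i\<in>P. lm \<le> lam i" and lm: "lm > 0"
    and Z: "\<forall>i\<in>{1..CARD('n)} - P. lam i = 0"
    and M: "M \<ge> 0" "\<forall>x\<in>S. \<forall>a b. \<bar>a \<bullet> (A x *v b)\<bar> \<le> M * norm a * norm b"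
    and d: "d > 0" "\<forall>x\<in>S. \<forall>z. (\<forall>i\<in>P. z \<bullet> v i = 0) \<longrightarrow> d * (norm z)^2 \<le> z \<bullet> (A x *v z)"
  shows "\<exists>t0>0. \<forall>x\<in>S. \<forall>t>t0. \<forall>w. 0 \<le> w \<bullet> ((A x + (t^2/6) *\<^sub>R C) *v w)"
proof -
  define K where "K = (M + M^2/d) / lm"
  have K0: "K \<ge> 0" unfolding K_def using M d lm by auto
  define t0 where "t0 = sqrt (6*K) + 1"
  have t00: "t0 > 0" unfolding t0_def using K0 by (simp add: add_nonneg_pos)
  have fP: "finite P" using P finite_subset by blast
  show ?thesis
  proof (intro exI[of _ t0] conjI t00 ballI allI impI)
    fix x t w assume x: "x \<in> S" and t: "t > t0"
    define s where "s = t^2/6"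
    have "sqrt (6*K) < t" using t unfolding t0_def by simp
    then have "(sqrt (6*K))^2 < t^2" using K0 by (intro power_strict_mono) auto
    then have "6*K < t^2" using K0 by simp
    then have sK: "K \<le> s" unfolding s_def by simp
    then have slm: "s * lm \<ge> M + M^2/d" unfolding K_def using lm by (simp add: field_simps)
    define u where "u = (\<Sum>i\<in>P. (w \<bullet> v i) *\<^sub>R v i)"
    define z where "z = w - u"
    have wuz: "w = u + z" unfolding z_def by simp
    have zP: "\<forall>i\<in>P. z \<bullet> v i = 0"
      using partial_sum[OF on P] P unfolding z_def u_def by (auto simp: inner_diff_left)
    have uu: "u \<bullet> u = (\<Sum>i\<in>P. (w \<bullet> v i)^2)" unfolding u_def by (rule partial_norm[OF on P])
    have Cq: "w \<bullet> (C *v w) \<ge> lm * (norm u)^2"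
    proof -
      have e0: "w \<bullet> (C *v w) = (\<Sum>i\<in>{1..CARD('n)}. lam i * (w \<bullet> v i)^2)" by (rule eig_quad[OF on eig])
      have e1: "(\<Sum>i\<in>{1..CARD('n)}. lam i * (w \<bullet> v i)^2) = (\<Sum>i\<in>P. lam i * (w \<bullet> v i)^2) + (\<Sum>i\<in>{1..CARD('n)} - P. lam i * (w \<bullet> v i)^2)"
        using P by (simp add: sum.subset_diff[of P])
      have e2: "(\<Sum>i\<in>{1..CARD('n)} - P. lam i * (w \<bullet> v i)^2) = 0" using Z by simp
      have e3: "(\<Sum>i\<in>P. lam i * (w \<bullet> v i)^2) \<ge> (\<Sum>i\<in>P. lm * (w \<bullet> v i)^2)"
        using lmP by (intro sum_mono mult_right_mono) auto
      have e4: "lm * (norm u)^2 = (\<Sum>i\<in>P. lm * (w \<bullet> v i)^2)"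
        using uu by (simp add: sum_distrib_left power2_norm_eq_inner)
      show ?thesis using e0 e1 e2 e3 e4 by linarith
    qed
    have Aq: "w \<bullet> (A x *v w) \<ge> - M * (norm u)^2 - 2 * M * norm u * norm z + d * (norm z)^2"
    proof -
      have e: "w \<bullet> (A x *v w) = u \<bullet> (A x *v u) + u \<bullet> (A x *v z) + z \<bullet> (A x *v u) + z \<bullet> (A x *v z)"
        unfolding wuz by (simp add: matrix_vector_right_distrib inner_add_left inner_add_right)
      have h1: "\<bar>u \<bullet> (A x *v u)\<bar> \<le> M * norm u * norm u" using M(2) x by blast
      have h2: "\<bar>u \<bullet> (A x *v z)\<bar> \<le> M * norm u * norm z" using M(2) x by blast
      have h3: "\<bar>z \<bullet> (A x *v u)\<bar> \<le> M * norm z * norm u" using M(2) x by blast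
      have b1: "u \<bullet> (A x *v u) \<ge> - M * (norm u)^2" using h1 unfolding power2_eq_square abs_le_iff by (simp add: mult.assoc)
      have b2: "u \<bullet> (A x *v z) \<ge> - M * norm u * norm z" using h2 unfolding abs_le_iff by simp
      have b3: "z \<bullet> (A x *v u) \<ge> - M * norm u * norm z" using h3 unfolding abs_le_iff by (simp add: mult.commute mult.left_commute)
      have b4: "z \<bullet> (A x *v z) \<ge> d * (norm z)^2" using d(2) x zP by blast
      show ?thesis unfolding e using b1 b2 b3 b4 by linarith
    qed
    have "w \<bullet> ((A x + s *\<^sub>R C) *v w) = w \<bullet> (A x *v w) + s * (w \<bullet> (C *v w))"
      by (simp add: matrix_vector_mult_add_rdistrib scaleR_matrix_vector_assoc[symmetric] inner_add_right)
    also have "\<dots> \<ge> - M * (norm u)^2 - 2 * M * norm u * norm z + d * (norm z)^2 + (s * lm) * (norm u)^2"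
    proof -
      have "s \<ge> 0" unfolding s_def by simp
      then have "s * (w \<bullet> (C *v w)) \<ge> s * (lm * (norm u)^2)" using Cq by (intro mult_left_mono) auto
      then show ?thesis using Aq by (simp add: mult.assoc)
    qed
    finally have fin: "w \<bullet> ((A x + s *\<^sub>R C) *v w) \<ge> - M * (norm u)^2 - 2 * M * norm u * norm z + d * (norm z)^2 + (s * lm) * (norm u)^2" .
    have "0 \<le> (s * lm) * (norm u)^2 - M * (norm u)^2 - 2 * M * norm u * norm z + d * (norm z)^2"
      by (rule quad_final[OF d(1) M(1) slm]) auto
    then show "0 \<le> w \<bullet> ((A x + (t^2/6) *\<^sub>R C) *v w)" using fin unfolding s_def by linarith
  qed
qed

lemma quad_sum:
  fixes A :: "real^'n^'n"
  shows "a \<bullet> (A *v b) = (\<Sum>i\<in>UNIV. \<Sum>j\<in>UNIV. a$i * A$i$j * b$j)"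
  by (simp add: inner_vec_def matrix_vector_mult_def sum_distrib_left mult.assoc)

lemma bound_exists:
  fixes A :: "real^'n \<Rightarrow> real^'n^'n"
  assumes S: "compact S" and cont: "\<And>i j. continuous_on S (\<lambda>x. A x $ i $ j)"
  shows "\<exists>M\<ge>0. \<forall>x\<in>S. \<forall>a b. \<bar>a \<bullet> (A x *v b)\<bar> \<le> M * norm a * norm b"
proof -
  define Hn where "Hn x = (\<Sum>i\<in>UNIV. \<Sum>j\<in>UNIV. \<bar>A x $ i $ j\<bar>)" for x
  have "continuous_on S Hn" unfolding Hn_def by (intro continuous_intros cont)
  then have "compact (Hn ` S)" using S by (rule compact_continuous_image)
  then have "bounded (Hn ` S)" by (rule compact_imp_bounded)
  then obtain B where B: "\<forall>y\<in>Hn ` S. \<bar>y\<bar> \<le> B" unfolding bounded_real by blast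
  show ?thesis
  proof (intro exI[of _ "max B 0"] conjI ballI allI)
    show "max B 0 \<ge> 0" by simp
    fix x a b assume x: "x \<in> S"
    have "\<bar>a \<bullet> (A x *v b)\<bar> \<le> (\<Sum>i\<in>UNIV. \<Sum>j\<in>UNIV. \<bar>a$i * A x$i$j * b$j\<bar>)"
      unfolding quad_sum by (rule order_trans[OF sum_abs sum_mono]) (rule sum_abs)
    also have "\<dots> \<le> (\<Sum>i\<in>UNIV. \<Sum>j\<in>UNIV. \<bar>A x$i$j\<bar> * (norm a * norm b))"
    proof (intro sum_mono)
      fix i j
      have "\<bar>a$i\<bar> * \<bar>b$j\<bar> \<le> norm a * norm b"
        by (intro mult_mono component_le_norm_cart) auto
      then have "\<bar>a$i\<bar> * \<bar>b$j\<bar> * \<bar>A x$i$j\<bar> \<le> norm a * norm b * \<bar>A x$i$j\<bar>"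
        by (rule mult_right_mono) simp
      then show "\<bar>a$i * A x$i$j * b$j\<bar> \<le> \<bar>A x$i$j\<bar> * (norm a * norm b)"
        by (simp add: abs_mult mult_ac)
    qed
    also have "\<dots> = Hn x * norm a * norm b" unfolding Hn_def by (simp add: sum_distrib_right mult.assoc)
    also have "\<dots> \<le> max B 0 * norm a * norm b"
    proof -
      have "Hn x \<le> max B 0" using B x by force
      then show ?thesis by (intro mult_right_mono) auto
    qed
    finally show "\<bar>a \<bullet> (A x *v b)\<bar> \<le> max B 0 * norm a * norm b" .
  qed
qed

lemma quad_scale:
  fixes A :: "real^'n^'n"
  shows "(c *\<^sub>R z) \<bullet> (A *v (c *\<^sub>R z)) = c^2 * (z \<bullet> (A *v z))"
  by (simp add: matrix_vector_mult_scaleR power2_eq_square)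

lemma delta_exists:
  fixes A :: "real^'n \<Rightarrow> real^'n^'n" and v :: "nat \<Rightarrow> real^'n"
  assumes S: "compact S" and cont: "\<And>i j. continuous_on S (\<lambda>x. A x $ i $ j)"
    and pos: "\<forall>z x. norm z = 1 \<longrightarrow> (\<forall>i\<in>P. z \<bullet> v i = 0) \<longrightarrow> x \<in> S \<longrightarrow> z \<bullet> (A x *v z) > 0"
  shows "\<exists>d>0. \<forall>x\<in>S. \<forall>z. (\<forall>i\<in>P. z \<bullet> v i = 0) \<longrightarrow> d * (norm z)^2 \<le> z \<bullet> (A x *v z)"
proof -
  define K1 where "K1 = sphere (0::real^'n) 1 \<inter> (\<Inter>i\<in>P. {z. v i \<bullet> z = 0})"
  have cK1: "compact K1" unfolding K1_def
    by (intro compact_Int_closed compact_sphere closed_INT ballI closed_hyperplane)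
  define K where "K = K1 \<times> S"
  have cK: "compact K" unfolding K_def using cK1 S by (rule compact_Times)
  define g where "g p = (\<Sum>i\<in>UNIV. \<Sum>j\<in>UNIV. (fst p)$i * (A (snd p))$i$j * (fst p)$j)" for p :: "(real^'n) \<times> (real^'n)"
  have gq: "g (z, x) = z \<bullet> (A x *v z)" for z x unfolding g_def quad_sum by simp
  have cg: "continuous_on K g"
  proof -
    have ce: "continuous_on K (\<lambda>p. (A (snd p))$i$j)" for i j
      by (rule continuous_on_compose2[OF cont[of i j] continuous_on_snd]) (auto simp: K_def)
    show ?thesis unfolding g_def
      by (intro continuous_intros ce)
  qed
  have mem: "z /\<^sub>R norm z \<in> K1" if "z \<noteq> 0" "\<forall>i\<in>P. z \<bullet> v i = 0" for z
    using that unfolding K1_def by (auto simp: inner_commute)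
  have scale: "z \<bullet> (A x *v z) = (norm z)^2 * ((z /\<^sub>R norm z) \<bullet> (A x *v (z /\<^sub>R norm z)))" for z x
  proof (cases "z = 0")
    case False
    have "z = norm z *\<^sub>R (z /\<^sub>R norm z)" using False by simp
    then have "z \<bullet> (A x *v z) = (norm z *\<^sub>R (z /\<^sub>R norm z)) \<bullet> (A x *v (norm z *\<^sub>R (z /\<^sub>R norm z)))" by simp
    then show ?thesis unfolding quad_scale .
  qed simp
  show ?thesis
  proof (cases "K = {}")
    case True
    show ?thesis
    proof (intro exI[of _ 1] conjI allI ballI impI)
      fix x z assume x: "x \<in> S" and z: "\<forall>i\<in>P. z \<bullet> v i = 0"
      have "z = 0"
      proof (rule ccontr)
        assume "z \<noteq> 0"
        then have "(z /\<^sub>R norm z, x) \<in> K" using mem z x unfolding K_def by auto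
        then show False using True by auto
      qed
      then show "1 * (norm z)^2 \<le> z \<bullet> (A x *v z)" by simp
    qed simp
  next
    case False
    obtain p where p: "p \<in> K" and pmin: "\<forall>q\<in>K. g p \<le> g q"
      using continuous_attains_inf[OF cK False cg] by blast
    have gp: "g p > 0"
    proof -
      obtain z x where pz: "p = (z, x)" by (cases p)
      have "z \<in> K1" "x \<in> S" using p pz unfolding K_def by auto
      then have "norm z = 1" "\<forall>i\<in>P. z \<bullet> v i = 0" unfolding K1_def by (auto simp: inner_commute)
      then show ?thesis unfolding pz gq using pos \<open>x \<in> S\<close> by blast
    qed
    show ?thesis
    proof (intro exI[of _ "g p"] conjI allI ballI impI gp)
      fix x z assume x: "x \<in> S" and z: "\<forall>i\<in>P. z \<bullet> v i = 0"
      show "g p * (norm z)^2 \<le> z \<bullet> (A x *v z)"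
      proof (cases "z = 0")
        case False
        have "(z /\<^sub>R norm z, x) \<in> K" using mem[OF False z] x unfolding K_def by auto
        then have "g p \<le> (z /\<^sub>R norm z) \<bullet> (A x *v (z /\<^sub>R norm z))" using pmin gq by metis
        then have "g p * (norm z)^2 \<le> ((z /\<^sub>R norm z) \<bullet> (A x *v (z /\<^sub>R norm z))) * (norm z)^2"
          by (rule mult_right_mono) simp
        then show ?thesis using scale[of z x] by (metis mult.commute)
      qed simp
    qed
  qed
qed

lemma quad_expand:
  fixes A :: "real^'n^'n" and v :: "nat \<Rightarrow> real^'n"
  shows "(\<Sum>i\<in>Z. c i *\<^sub>R v i) \<bullet> (A *v (\<Sum>j\<in>Z. c j *\<^sub>R v j)) = (\<Sum>i\<in>Z. \<Sum>j\<in>Z. c i * c j * (v i \<bullet> (A *v v j)))"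
proof -
  have "(\<Sum>i\<in>Z. c i *\<^sub>R v i) \<bullet> (A *v (\<Sum>j\<in>Z. c j *\<^sub>R v j)) = (\<Sum>i\<in>Z. c i * (v i \<bullet> (A *v (\<Sum>j\<in>Z. c j *\<^sub>R v j))))"
    by (simp add: inner_sum_left)
  also have "\<dots> = (\<Sum>i\<in>Z. c i * (\<Sum>j\<in>Z. c j * (v i \<bullet> (A *v v j))))"
    by (simp add: mv_sum inner_sum_right)
  also have "\<dots> = (\<Sum>i\<in>Z. \<Sum>j\<in>Z. c i * c j * (v i \<bullet> (A *v v j)))"
    by (simp add: sum_distrib_left mult.assoc)
  finally show ?thesis .
qed

lemma ONB_indep:
  fixes v :: "nat \<Rightarrow> real^'n"
  assumes on: "ONB v"
  shows "inj_on v {1..CARD('n)}" "independent (v ` {1..CARD('n)})"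
proof -
  let ?I = "{1..CARD('n)}"
  show inj: "inj_on v ?I"
  proof (rule inj_onI)
    fix i j assume ij: "i \<in> ?I" "j \<in> ?I" "v i = v j"
    then have "v i \<bullet> v j = 1" using ONB_D[OF on, of i i] by simp
    then show "i = j" using ONB_D[OF on ij(1,2)] by (auto split: if_splits)
  qed
  show "independent (v ` ?I)"
  proof (rule pairwise_orthogonal_independent)
    show "pairwise orthogonal (v ` ?I)"
      unfolding pairwise_def orthogonal_def using ONB_D[OF on] by auto
    show "0 \<notin> v ` ?I"
    proof
      assume "0 \<in> v ` ?I"
      then obtain i where "i \<in> ?I" "v i = 0" by auto
      then show False using ONB_D[OF on, of i i] by simp
    qed
  qed
qed

lemma dim_lemma:
  fixes v :: "nat \<Rightarrow> real^'n" and C :: "real^'n^'n"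
  assumes on: "ONB v" and eig: "\<forall>i\<in>{1..CARD('n)}. C *v v i = lam i *\<^sub>R v i"
    and lam0: "\<forall>i\<in>{1..CARD('n)}. lam i \<ge> 0"
    and N: "N = {x. C *v x = 0}"
  shows "dim (orthogonal_comp N) = card {i\<in>{1..CARD('n)}. lam i > 0}"
proof -
  let ?I = "{1..CARD('n)}"
  define P where "P = {i\<in>?I. lam i > 0}"
  have P: "P \<subseteq> ?I" unfolding P_def by auto
  have Cv: "(C *v x) \<bullet> v j = lam j * (x \<bullet> v j)" if j: "j \<in> ?I" for x j
    unfolding eig_apply[OF on eig] using partial_sum[OF on _ j, of ?I] j by simp
  have Neq: "N = orthogonal_comp (span (v ` P))"
  proof (intro set_eqI iffI)
    fix x assume "x \<in> N"
    then have Cx: "C *v x = 0" using N by simp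
    have xP: "\<forall>i\<in>P. v i \<bullet> x = 0"
    proof
      fix i assume i: "i \<in> P"
      then have "lam i * (x \<bullet> v i) = 0" using Cv[of i x] Cx P by auto
      then show "v i \<bullet> x = 0" using i unfolding P_def by (auto simp: inner_commute)
    qed
    show "x \<in> orthogonal_comp (span (v ` P))"
      unfolding orthogonal_comp_def
    proof (intro CollectI ballI)
      fix y assume "y \<in> span (v ` P)"
      then have "orthogonal x y"
        by (rule orthogonal_to_span) (use xP in \<open>auto simp: orthogonal_def inner_commute\<close>)
      then show "orthogonal y x" by (simp add: orthogonal_commute)
    qed
  next
    fix x assume "x \<in> orthogonal_comp (span (v ` P))"
    then have xP: "\<forall>i\<in>P. v i \<bullet> x = 0"
      unfolding orthogonal_comp_def orthogonal_def by (auto intro: span_base)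
    have "C *v x = (\<Sum>i\<in>?I. (lam i * (x \<bullet> v i)) *\<^sub>R v i)" by (rule eig_apply[OF on eig])
    also have "\<dots> = 0"
    proof (intro sum.neutral ballI)
      fix i assume i: "i \<in> ?I"
      show "(lam i * (x \<bullet> v i)) *\<^sub>R v i = 0"
      proof (cases "i \<in> P")
        case True then show ?thesis using xP by (simp add: inner_commute)
      next
        case False then have "lam i = 0" using i lam0 unfolding P_def by force
        then show ?thesis by simp
      qed
    qed
    finally show "x \<in> N" using N by simp
  qed
  have "orthogonal_comp N = span (v ` P)"
    unfolding Neq by (rule orthogonal_comp_self) (rule subspace_span)
  moreover have "independent (v ` P)"
    by (rule independent_mono[OF ONB_indep(2)[OF on]]) (use P in auto)
  moreover have "card (v ` P) = card P"
    by (rule card_image[OF inj_on_subset[OF ONB_indep(1)[OF on] P]])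
  ultimately show ?thesis unfolding P_def[symmetric] by (simp add: dim_eq_card_independent)
qed

lemma pos_interval:
  fixes lam :: "nat \<Rightarrow> real"
  assumes ordered: "\<forall>i j. 1 \<le> i \<longrightarrow> i \<le> j \<longrightarrow> j \<le> n \<longrightarrow> lam j \<le> lam i"
  shows "{i\<in>{1..n}. lam i > 0} = {1..card {i\<in>{1..n}. lam i > 0}}"
proof -
  define P where "P = {i\<in>{1..n}. lam i > 0}"
  define p where "p = (if P = {} then 0 else Max P)"
  have fP: "finite P" unfolding P_def by simp
  have eq: "P = {1..p}"
  proof (cases "P = {}")
    case True then show ?thesis unfolding p_def by simp
  next
    case False
    have mP: "Max P \<in> P" using Max_in[OF fP False] .
    show ?thesis
    proof (intro set_eqI iffI)
      fix i assume "i \<in> P"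
      then show "i \<in> {1..p}" unfolding p_def using False fP P_def by auto
    next
      fix i assume i: "i \<in> {1..p}"
      then have "i \<le> Max P" "1 \<le> i" using False unfolding p_def by auto
      moreover have "Max P \<le> n" "lam (Max P) > 0" using mP unfolding P_def by auto
      ultimately have "lam i > 0" using ordered by (meson order_less_le_trans)
      then show "i \<in> P" unfolding P_def using \<open>i \<le> Max P\<close> \<open>Max P \<le> n\<close> \<open>1 \<le> i\<close> by auto
    qed
  qed
  show ?thesis unfolding P_def[symmetric] using eq by simp
qed

theorem lemma2:
  fixes f :: "real^'n \<Rightarrow> real"
    and C :: "real^'n^'n"
    and lam :: "nat \<Rightarrow> real"
    and v :: "nat \<Rightarrow> real^'n"
    and L :: real
  assumes poly: "poly_fun_deg_le 4 f"
    and C_def: "\<forall>x. C = (\<Sum>i\<in>UNIV. hess (pderiv_i i (pderiv_i i f)) x)"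
    and C_psd: "psd C"
    and C_nz: "C \<noteq> 0"
    and orthonormal: "\<forall>i\<in>{1..CARD('n)}. \<forall>j\<in>{1..CARD('n)}. v i \<bullet> v j = (if i = j then 1 else 0)"
    and eigen: "\<forall>i\<in>{1..CARD('n)}. C *v v i = lam i *\<^sub>R v i"
    and ordered: "\<forall>i j. 1 \<le> i \<longrightarrow> i \<le> j \<longrightarrow> j \<le> CARD('n) \<longrightarrow> lam j \<le> lam i"
    and L_pos: "L > 0"
  shows
    "(lam (CARD('n)) = 0 \<longrightarrow>
       (let r = dim (orthogonal_comp (null_space C));
            phi = (\<lambda>(\<alpha>::nat \<Rightarrow> real) x.
                     \<Sum>i\<in>{r+1..CARD('n)}. \<Sum>j\<in>{r+1..CARD('n)}.
                        \<alpha> i * \<alpha> j * (v i \<bullet> (hess f x *v v j)));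
            S = {\<alpha>::nat \<Rightarrow> real. (\<Sum>i\<in>{r+1..CARD('n)}. (\<alpha> i)\<^sup>2) = 1}
        in ((\<forall>\<alpha>\<in>S. \<forall>x\<in>cball 0 L. phi \<alpha> x > 0) \<longrightarrow>
              (\<exists>t0>0. \<forall>x\<in>cball 0 L. \<forall>t>t0. psd (hess (\<lambda>y. steklov f y t) x)))
         \<and> ((\<exists>t0>0. \<forall>x\<in>cball 0 L. \<forall>t>t0. psd (hess (\<lambda>y. steklov f y t) x)) \<longrightarrow>
              (\<forall>\<alpha>\<in>S. \<forall>x\<in>cball 0 L. phi \<alpha> x \<ge> 0))))
     \<and> (lam (CARD('n)) > 0 \<longrightarrow>
          (\<exists>t0>0. \<forall>x\<in>cball 0 L. \<forall>t>t0. psd (hess (\<lambda>y. steklov f y t) x)))"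
proof -
  define n where "n = CARD('n)"
  define I where "I = {1..n}"
  have on: "ONB v" unfolding ONB_def using orthonormal by blast
  have lam0: "\<forall>i\<in>I. lam i \<ge> 0"
  proof
    fix i assume i: "i \<in> I"
    have "v i \<bullet> (C *v v i) = lam i"
      using eigen i ONB_D[OF on, of i i] unfolding I_def n_def by simp
    then show "lam i \<ge> 0" using C_psd unfolding psd_def by metis
  qed
  define A where "A x = hess f x" for x
  have hs: "hess (\<lambda>y. steklov f y t) x = A x + (t^2/6) *\<^sub>R C" if "t > 0" for t x
    unfolding A_def using hess_steklov[OF poly that, of x] C_def by metis
  have psd_iff: "psd (hess (\<lambda>y. steklov f y t) x) \<longleftrightarrow> (\<forall>w. 0 \<le> w \<bullet> ((A x + (t^2/6) *\<^sub>R C) *v w))" if "t > 0" for t x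
    unfolding psd_def hs[OF that] ..
  have contA: "continuous_on (cball 0 L) (\<lambda>x. A x $ i $ j)" for i j
    unfolding A_def by (rule hess_cont[OF poly])
  obtain M where M: "M \<ge> 0" "\<forall>x\<in>cball 0 L. \<forall>a b. \<bar>a \<bullet> (A x *v b)\<bar> \<le> M * norm a * norm b"
    using bound_exists[OF compact_cball contA] by blast
  define P where "P = {i\<in>I. lam i > 0}"
  define p where "p = card P"
  have Pint: "P = {1..p}" unfolding P_def p_def I_def n_def by (rule pos_interval[OF ordered])
  have PI: "P \<subseteq> I" unfolding P_def by auto
  have fP: "finite P" using Pint by simp
  have pn: "p \<le> n" using PI Pint unfolding I_def by (cases "p = 0") auto
  have rp: "dim (orthogonal_comp (null_space C)) = p"
    unfolding p_def P_def I_def n_def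
    by (rule dim_lemma[OF on eigen]) (use lam0 in \<open>auto simp: I_def n_def null_space_def\<close>)
  have Zeq: "I - P = {p+1..n}" unfolding Pint I_def by auto
  have lamZ: "\<forall>i\<in>I - P. lam i = 0" using lam0 unfolding P_def by force
  have key: "\<exists>t0>0. \<forall>x\<in>cball 0 L. \<forall>t>t0. psd (hess (\<lambda>y. steklov f y t) x)"
    if d: "d > 0" "\<forall>x\<in>cball 0 L. \<forall>z. (\<forall>i\<in>P. z \<bullet> v i = 0) \<longrightarrow> d * (norm z)^2 \<le> z \<bullet> (A x *v z)" for d
  proof -
    define lm where "lm = (if P = {} then 1 else Min (lam ` P))"
    have lmP: "\<forall>i\<in>P. lm \<le> lam i" unfolding lm_def using fP by auto
    have lm: "lm > 0"
    proof (cases "P = {}")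
      case False
      then have "Min (lam ` P) \<in> lam ` P" using fP by (intro Min_in) auto
      then show ?thesis unfolding lm_def P_def using False by auto
    qed (simp add: lm_def)
    obtain t0 where t0: "t0 > 0" "\<forall>x\<in>cball 0 L. \<forall>t>t0. \<forall>w. 0 \<le> w \<bullet> ((A x + (t^2/6) *\<^sub>R C) *v w)"
      using core[OF on eigen, where P=P and lm=lm and M=M and S="cball 0 L" and A=A and d=d] PI lmP lm lamZ M d
      unfolding I_def n_def by blast
    show ?thesis
    proof (intro exI[of _ t0] conjI t0(1) ballI allI impI)
      fix x :: "real^'n" and t :: real assume "x \<in> cball 0 L" "t0 < t"
      then show "psd (hess (\<lambda>y. steklov f y t) x)" using psd_iff[of t x] t0 by auto
    qed
  qed
  have fI: "finite I" unfolding I_def by simp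
  have Zsub: "{p+1..n} \<subseteq> {1..CARD('n)}" unfolding n_def by auto
  have lamZ': "lam i = 0" if "i \<in> {p+1..n}" for i using lamZ Zeq that by auto
  have expandZ: "z = (\<Sum>i\<in>{p+1..n}. (z \<bullet> v i) *\<^sub>R v i)" if zP: "\<forall>i\<in>P. z \<bullet> v i = 0" for z
  proof -
    have "z = (\<Sum>i\<in>I. (z \<bullet> v i) *\<^sub>R v i)" using ONB_expand[OF on, of z] unfolding I_def n_def .
    also have "\<dots> = (\<Sum>i\<in>I - P. (z \<bullet> v i) *\<^sub>R v i) + (\<Sum>i\<in>P. (z \<bullet> v i) *\<^sub>R v i)"
      using sum.subset_diff[OF PI fI] by simp
    also have "(\<Sum>i\<in>P. (z \<bullet> v i) *\<^sub>R v i) = 0" using zP by simp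
    finally show ?thesis unfolding Zeq by simp
  qed
  show ?thesis
  proof (intro conjI impI)
    assume ln: "lam (CARD('n)) = 0"
    show "let r = dim (orthogonal_comp (null_space C));
            phi = (\<lambda>(\<alpha>::nat \<Rightarrow> real) x.
                     \<Sum>i\<in>{r+1..CARD('n)}. \<Sum>j\<in>{r+1..CARD('n)}.
                        \<alpha> i * \<alpha> j * (v i \<bullet> (hess f x *v v j)));
            S = {\<alpha>::nat \<Rightarrow> real. (\<Sum>i\<in>{r+1..CARD('n)}. (\<alpha> i)\<^sup>2) = 1}
        in ((\<forall>\<alpha>\<in>S. \<forall>x\<in>cball 0 L. phi \<alpha> x > 0) \<longrightarrow>
              (\<exists>t0>0. \<forall>x\<in>cball 0 L. \<forall>t>t0. psd (hess (\<lambda>y. steklov f y t) x)))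
         \<and> ((\<exists>t0>0. \<forall>x\<in>cball 0 L. \<forall>t>t0. psd (hess (\<lambda>y. steklov f y t) x)) \<longrightarrow>
              (\<forall>\<alpha>\<in>S. \<forall>x\<in>cball 0 L. phi \<alpha> x \<ge> 0))"
      unfolding Let_def rp n_def[symmetric] A_def[symmetric]
    proof (intro conjI impI)
      assume Hi: "\<forall>\<alpha>\<in>{\<alpha>. (\<Sum>i = p + 1..n. (\<alpha> i)\<^sup>2) = 1}. \<forall>x\<in>cball 0 L.
          0 < (\<Sum>i = p + 1..n. \<Sum>j = p + 1..n. \<alpha> i * \<alpha> j * (v i \<bullet> (A x *v v j)))"
      have pos: "\<forall>z x. norm z = 1 \<longrightarrow> (\<forall>i\<in>P. z \<bullet> v i = 0) \<longrightarrow> x \<in> cball 0 L \<longrightarrow> z \<bullet> (A x *v z) > 0"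
      proof (intro allI impI)
        fix z :: "real^'n" and x :: "real^'n"
        assume z1: "norm z = 1" and zP: "\<forall>i\<in>P. z \<bullet> v i = 0" and x: "x \<in> cball 0 L"
        define \<alpha> where "\<alpha> i = z \<bullet> v i" for i
        have ze: "z = (\<Sum>i\<in>{p+1..n}. \<alpha> i *\<^sub>R v i)" unfolding \<alpha>_def by (rule expandZ[OF zP])
        have "1 = z \<bullet> z" using z1 by (simp add: power2_norm_eq_inner[symmetric])
        also have "\<dots> = (\<Sum>i\<in>{p+1..n}. (\<alpha> i)^2)"
          by (subst (1 2) ze) (rule partial_norm[OF on Zsub])
        finally have "\<alpha> \<in> {\<alpha>. (\<Sum>i = p + 1..n. (\<alpha> i)\<^sup>2) = 1}" by simp
        then have "0 < (\<Sum>i = p + 1..n. \<Sum>j = p + 1..n. \<alpha> i * \<alpha> j * (v i \<bullet> (A x *v v j)))"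
          using Hi x by blast
        also have "\<dots> = z \<bullet> (A x *v z)"
          by (subst (1 2) ze) (rule quad_expand[symmetric])
        finally show "z \<bullet> (A x *v z) > 0" .
      qed
      obtain d where "d > 0" "\<forall>x\<in>cball 0 L. \<forall>z. (\<forall>i\<in>P. z \<bullet> v i = 0) \<longrightarrow> d * (norm z)^2 \<le> z \<bullet> (A x *v z)"
        using delta_exists[OF compact_cball contA pos] by blast
      then show "\<exists>t0>0. \<forall>x\<in>cball 0 L. \<forall>t>t0. psd (hess (\<lambda>y. steklov f y t) x)" by (rule key)
    next
      assume "\<exists>t0>0. \<forall>x\<in>cball 0 L. \<forall>t>t0. psd (hess (\<lambda>y. steklov f y t) x)"
      then obtain t0 where t0: "t0 > 0" "\<forall>x\<in>cball 0 L. \<forall>t>t0. psd (hess (\<lambda>y. steklov f y t) x)" by blast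
      show "\<forall>\<alpha>\<in>{\<alpha>. (\<Sum>i = p + 1..n. (\<alpha> i)\<^sup>2) = 1}. \<forall>x\<in>cball 0 L.
          0 \<le> (\<Sum>i = p + 1..n. \<Sum>j = p + 1..n. \<alpha> i * \<alpha> j * (v i \<bullet> (A x *v v j)))"
      proof (intro ballI)
        fix \<alpha> :: "nat \<Rightarrow> real" and x :: "real^'n" assume x: "x \<in> cball 0 L"
        define t where "t = t0 + 1"
        have t: "t > 0" "t > t0" unfolding t_def using t0 by auto
        have ps: "\<forall>w. 0 \<le> w \<bullet> ((A x + (t^2/6) *\<^sub>R C) *v w)"
          using t0(2) x t psd_iff[OF t(1), of x] by blast
        define z where "z = (\<Sum>i\<in>{p+1..n}. \<alpha> i *\<^sub>R v i)"
        have Cz: "C *v z = 0"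
          unfolding z_def mv_sum using eigen Zsub lamZ' by (intro sum.neutral) (auto simp: n_def)
        have "0 \<le> z \<bullet> ((A x + (t^2/6) *\<^sub>R C) *v z)" using ps by blast
        also have "\<dots> = z \<bullet> (A x *v z)"
          by (simp add: matrix_vector_mult_add_rdistrib scaleR_matrix_vector_assoc[symmetric] inner_add_right Cz)
        also have "\<dots> = (\<Sum>i = p + 1..n. \<Sum>j = p + 1..n. \<alpha> i * \<alpha> j * (v i \<bullet> (A x *v v j)))"
          unfolding z_def by (rule quad_expand)
        finally show "0 \<le> (\<Sum>i = p + 1..n. \<Sum>j = p + 1..n. \<alpha> i * \<alpha> j * (v i \<bullet> (A x *v v j)))" .
      qed
    qed
  next
    assume lp: "lam (CARD('n)) > 0"
    have PI': "\<forall>i\<in>I. i \<in> P"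
    proof
      fix i assume i: "i \<in> I"
      then have "lam (CARD('n)) \<le> lam i" using ordered unfolding I_def n_def by auto
      then show "i \<in> P" using lp i unfolding P_def by auto
    qed
    show "\<exists>t0>0. \<forall>x\<in>cball 0 L. \<forall>t>t0. psd (hess (\<lambda>y. steklov f y t) x)"
    proof (rule key[of 1])
      show "\<forall>x\<in>cball 0 L. \<forall>z. (\<forall>i\<in>P. z \<bullet> v i = 0) \<longrightarrow> 1 * (norm z)^2 \<le> z \<bullet> (A x *v z)"
      proof (intro ballI allI impI)
        fix x z assume zP: "\<forall>i\<in>P. z \<bullet> v (i::nat) = 0"
        have "z = (\<Sum>i\<in>I. (z \<bullet> v i) *\<^sub>R v i)" using ONB_expand[OF on, of z] unfolding I_def n_def .
        also have "\<dots> = 0" using zP PI' by simp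
        finally show "1 * (norm z)^2 \<le> z \<bullet> (A x *v z)" by simp
      qed
    qed simp
  qed
qed

end
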